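(* Even superfunctions $u=u(x\,|\,\nu,\tau)$ and $z=z(x\,|\,\nu,\tau)$ of one even variable $x$ and two odd variables $\nu,\tau$ satisfy the super Hilbert–Cartan equation $$z_x=\tfrac12u_{xx}^2+u_{x\nu}u_{x\tau},\quad z_\nu=u_{xx}u_{x\nu},\quad z_\tau=u_{xx}u_{x\tau},\quad u_{\nu\tau}=-u_{xx}$$ if and only if there exist constants $c_0,\dots,c_4\in\mathbb C$ such that $u=c_0+c_1x+\tfrac12c_2x^2+\tfrac16c_3x^3+(c_2+c_3x)\nu\tau$ and $z=c_4+\tfrac12c_2^2x+\tfrac12c_2c_3x^2+\tfrac16c_3^2x^3+c_3(c_2+c_3x)\nu\tau$.
   Context: Derivatives with respect to odd variables are left derivatives, $u_{x\nu}=\partial_\nu\partial_x u$ etc., and $u_{\nu\tau}$ denotes the second derivative of $u$ with respect to $\tau$ and $\nu$ (with the convention $u_{\nu\tau}=-u_{\tau\nu}$ for odd $\nu,\tau$). *)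

theory Defs
  imports "HOL-Analysis.Analysis"
begin

text \<open>Superfunctions of one even variable x (complex) and two odd variables nu, tau,
  with complex coefficients:  SF a b c d  represents  a(x) + b(x) nu + c(x) tau + d(x) nu tau.\<close>

datatype sfun = SF (sf0: "complex \<Rightarrow> complex") (sfN: "complex \<Rightarrow> complex")
                   (sfT: "complex \<Rightarrow> complex") (sfNT: "complex \<Rightarrow> complex")

instantiation sfun :: "{zero, one, plus, minus, uminus, times}"
begin
definition "0 = SF (\<lambda>_. 0) (\<lambda>_. 0) (\<lambda>_. 0) (\<lambda>_. 0)"
definition "1 = SF (\<lambda>_. 1) (\<lambda>_. 0) (\<lambda>_. 0) (\<lambda>_. 0)"
definition "f + g = SF (\<lambda>x. sf0 f x + sf0 g x) (\<lambda>x. sfN f x + sfN g x)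
                       (\<lambda>x. sfT f x + sfT g x) (\<lambda>x. sfNT f x + sfNT g x)"
definition "f - g = SF (\<lambda>x. sf0 f x - sf0 g x) (\<lambda>x. sfN f x - sfN g x)
                       (\<lambda>x. sfT f x - sfT g x) (\<lambda>x. sfNT f x - sfNT g x)"
definition "- f = SF (\<lambda>x. - sf0 f x) (\<lambda>x. - sfN f x) (\<lambda>x. - sfT f x) (\<lambda>x. - sfNT f x)"
text \<open>Grassmann product: nu*nu = tau*tau = 0, tau*nu = - nu*tau.\<close>
definition "f * g = SF (\<lambda>x. sf0 f x * sf0 g x)
                       (\<lambda>x. sf0 f x * sfN g x + sfN f x * sf0 g x)
                       (\<lambda>x. sf0 f x * sfT g x + sfT f x * sf0 g x)
                       (\<lambda>x. sf0 f x * sfNT g x + sfNT f x * sf0 g x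
                            + sfN f x * sfT g x - sfT f x * sfN g x)"
instance ..
end

definition sconst :: "complex \<Rightarrow> sfun" where
  "sconst c = SF (\<lambda>_. c) (\<lambda>_. 0) (\<lambda>_. 0) (\<lambda>_. 0)"

definition sX :: sfun where "sX = SF (\<lambda>x. x) (\<lambda>_. 0) (\<lambda>_. 0) (\<lambda>_. 0)"
definition sNu :: sfun where "sNu = SF (\<lambda>_. 0) (\<lambda>_. 1) (\<lambda>_. 0) (\<lambda>_. 0)"
definition sTau :: sfun where "sTau = SF (\<lambda>_. 0) (\<lambda>_. 0) (\<lambda>_. 1) (\<lambda>_. 0)"

definition dX :: "sfun \<Rightarrow> sfun" where
  "dX f = SF (deriv (sf0 f)) (deriv (sfN f)) (deriv (sfT f)) (deriv (sfNT f))"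

text \<open>Left derivatives in the odd variables:
  d_nu(a + b nu + c tau + d nu tau) = b + d tau,
  d_tau(a + b nu + c tau + d nu tau) = c - d nu.\<close>
definition dNu :: "sfun \<Rightarrow> sfun" where
  "dNu f = SF (sfN f) (\<lambda>_. 0) (sfNT f) (\<lambda>_. 0)"
definition dTau :: "sfun \<Rightarrow> sfun" where
  "dTau f = SF (sfT f) (\<lambda>x. - sfNT f x) (\<lambda>_. 0) (\<lambda>_. 0)"

definition sf_eq_on :: "complex set \<Rightarrow> sfun \<Rightarrow> sfun \<Rightarrow> bool" where
  "sf_eq_on U f g \<longleftrightarrow> (\<forall>x\<in>U. sf0 f x = sf0 g x \<and> sfN f x = sfN g x
                              \<and> sfT f x = sfT g x \<and> sfNT f x = sfNT g x)"

definition sf_holo :: "complex set \<Rightarrow> sfun \<Rightarrow> bool" where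
  "sf_holo U f \<longleftrightarrow> sf0 f holomorphic_on U \<and> sfN f holomorphic_on U
                   \<and> sfT f holomorphic_on U \<and> sfNT f holomorphic_on U"

text \<open>Even superfunction: no odd components (coefficients are complex numbers).\<close>
definition sf_even :: "complex set \<Rightarrow> sfun \<Rightarrow> bool" where
  "sf_even U f \<longleftrightarrow> (\<forall>x\<in>U. sfN f x = 0 \<and> sfT f x = 0)"

end

theory Submission imports Defs "HOL-Complex_Analysis.Cauchy_Integral_Formula" begin
lemma Ltr:
  assumes "open U" "\<forall>x\<in>U. f x = g x" "\<And>x. (g has_field_derivative g' x) (at x)"
  shows "\<forall>x\<in>U. deriv f x = g' x"
proof
  fix x assume x: "x \<in> U"
  have "(f has_field_derivative g' x) (at x)"
    by (rule has_field_derivative_transform_within_open[OF assms(3) assms(1) x]) (use assms(2) in auto)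
  then show "deriv f x = g' x" by (rule DERIV_imp_deriv)
qed

lemma Lconst:
  assumes "open U" "connected U" "f holomorphic_on U"
    "\<And>x. (g has_field_derivative g' x) (at x)" "\<forall>x\<in>U. deriv f x = g' x"
  shows "\<exists>c. \<forall>x\<in>U. f x = g x + c"
proof -
  have "\<exists>c. \<forall>x\<in>U. f x - g x = c"
  proof (rule DERIV_zero_connected_constant[OF assms(2) assms(1) finite.emptyI])
    have "continuous_on U g"
      using assms(4) by (meson DERIV_continuous continuous_at_imp_continuous_on)
    then show "continuous_on U (\<lambda>x. f x - g x)"
      using assms(3) holomorphic_on_imp_continuous_on by (intro continuous_intros) auto
    show "\<forall>x\<in>U - {}. ((\<lambda>x. f x - g x) has_field_derivative 0) (at x)"
    proof
      fix x assume "x \<in> U - {}"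
      then have x: "x \<in> U" by simp
      have "(f has_field_derivative deriv f x) (at x)"
        using assms(1,3) x holomorphic_derivI by blast
      then have "((\<lambda>x. f x - g x) has_field_derivative deriv f x - g' x) (at x)"
        using assms(4) by (intro derivative_intros) auto
      then show "((\<lambda>x. f x - g x) has_field_derivative 0) (at x)" using assms(5) x by simp
    qed
  qed blast
  then show ?thesis by (metis add_diff_cancel_left' diff_add_cancel)
qed


lemma sf_comps[simp]:
  "sf0 (f * g) x = sf0 f x * sf0 g x"
  "sfN (f * g) x = sf0 f x * sfN g x + sfN f x * sf0 g x"
  "sfT (f * g) x = sf0 f x * sfT g x + sfT f x * sf0 g x"
  "sfNT (f * g) x = sf0 f x * sfNT g x + sfNT f x * sf0 g x + sfN f x * sfT g x - sfT f x * sfN g x"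
  "sf0 (f + g) x = sf0 f x + sf0 g x" "sfN (f + g) x = sfN f x + sfN g x"
  "sfT (f + g) x = sfT f x + sfT g x" "sfNT (f + g) x = sfNT f x + sfNT g x"
  "sf0 (- f) x = - sf0 f x" "sfN (- f) x = - sfN f x"
  "sfT (- f) x = - sfT f x" "sfNT (- f) x = - sfNT f x"
  "sf0 (sconst c) x = c" "sfN (sconst c) x = 0" "sfT (sconst c) x = 0" "sfNT (sconst c) x = 0"
  "sf0 sX x = x" "sfN sX x = 0" "sfT sX x = 0" "sfNT sX x = 0"
  "sf0 sNu x = 0" "sfN sNu x = 1" "sfT sNu x = 0" "sfNT sNu x = 0"
  "sf0 sTau x = 0" "sfN sTau x = 0" "sfT sTau x = 1" "sfNT sTau x = 0"
  by (simp_all add: times_sfun_def plus_sfun_def uminus_sfun_def sconst_def sX_def sNu_def sTau_def)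
lemma sf_dcomps[simp]:
  "sf0 (dX f) = deriv (sf0 f)" "sfN (dX f) = deriv (sfN f)" "sfT (dX f) = deriv (sfT f)" "sfNT (dX f) = deriv (sfNT f)"
  "sf0 (dNu f) = sfN f" "sfN (dNu f) x = 0" "sfT (dNu f) = sfNT f" "sfNT (dNu f) x = 0"
  "sf0 (dTau f) = sfT f" "sfN (dTau f) x = - sfNT f x" "sfT (dTau f) x = 0" "sfNT (dTau f) x = 0"
  by (simp_all add: dX_def dNu_def dTau_def)

theorem proposition5p8:
  fixes U :: "complex set" and u z :: sfun
  assumes "open U" and "connected U"
    and "sf_holo U u" and "sf_holo U z"
    and "sf_even U u" and "sf_even U z"
  shows "(sf_eq_on U (dX z) (sconst (1/2) * dX (dX u) * dX (dX u) + dNu (dX u) * dTau (dX u))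
          \<and> sf_eq_on U (dNu z) (dX (dX u) * dNu (dX u))
          \<and> sf_eq_on U (dTau z) (dX (dX u) * dTau (dX u))
          \<and> sf_eq_on U (dNu (dTau u)) (- dX (dX u)))
     \<longleftrightarrow>
     (\<exists>c0 c1 c2 c3 c4 :: complex.
        sf_eq_on U u (sconst c0 + sconst c1 * sX + sconst (1/2) * sconst c2 * sX * sX
                      + sconst (1/6) * sconst c3 * sX * sX * sX
                      + (sconst c2 + sconst c3 * sX) * sNu * sTau)
      \<and> sf_eq_on U z (sconst c4 + sconst (1/2) * sconst c2 * sconst c2 * sX
                      + sconst (1/2) * sconst c2 * sconst c3 * sX * sX
                      + sconst (1/6) * sconst c3 * sconst c3 * sX * sX * sX
                      + sconst c3 * (sconst c2 + sconst c3 * sX) * sNu * sTau))"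
proof -
  have NU: "\<forall>x\<in>U. sfN u x = 0" "\<forall>x\<in>U. sfT u x = 0"
   and NZ: "\<forall>x\<in>U. sfN z x = 0" "\<forall>x\<in>U. sfT z x = 0"
    using assms(5,6) unfolding sf_even_def by auto
  have d0: "\<And>f. \<forall>x\<in>U. f x = 0 \<Longrightarrow> \<forall>x\<in>U. deriv f x = 0"
    using Ltr[OF assms(1), where g="\<lambda>_. 0" and g'="\<lambda>_. 0"] by auto
  have DN: "\<forall>x\<in>U. deriv (sfN u) x = 0" "\<forall>x\<in>U. deriv (sfT u) x = 0"
     "\<forall>x\<in>U. deriv (deriv (sfN u)) x = 0" "\<forall>x\<in>U. deriv (deriv (sfT u)) x = 0"
     "\<forall>x\<in>U. deriv (sfN z) x = 0" "\<forall>x\<in>U. deriv (sfT z) x = 0"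
    using d0 NU NZ by blast+
  have L1: "(sf_eq_on U (dX z) (sconst (1/2) * dX (dX u) * dX (dX u) + dNu (dX u) * dTau (dX u))
          \<and> sf_eq_on U (dNu z) (dX (dX u) * dNu (dX u))
          \<and> sf_eq_on U (dTau z) (dX (dX u) * dTau (dX u))
          \<and> sf_eq_on U (dNu (dTau u)) (- dX (dX u)))
     \<longleftrightarrow> (\<forall>x\<in>U. deriv (sf0 z) x = 1/2 * deriv (deriv (sf0 u)) x * deriv (deriv (sf0 u)) x
         \<and> deriv (sfNT z) x = deriv (deriv (sf0 u)) x * deriv (deriv (sfNT u)) x + deriv (sfNT u) x * deriv (sfNT u) x
         \<and> sfNT z x = deriv (deriv (sf0 u)) x * deriv (sfNT u) x
         \<and> sfNT u x = deriv (deriv (sf0 u)) x \<and> deriv (deriv (sfNT u)) x = 0)"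
    unfolding sf_eq_on_def dX_def dNu_def dTau_def sconst_def times_sfun_def plus_sfun_def uminus_sfun_def
    using DN NZ by (auto simp: algebra_simps)
  have R1: "sf_eq_on U u (sconst c0 + sconst c1 * sX + sconst (1/2) * sconst c2 * sX * sX
                      + sconst (1/6) * sconst c3 * sX * sX * sX
                      + (sconst c2 + sconst c3 * sX) * sNu * sTau)
     \<longleftrightarrow> (\<forall>x\<in>U. sf0 u x = c0 + c1 * x + 1/2 * c2 * x * x + 1/6 * c3 * x * x * x
                \<and> sfNT u x = c2 + c3 * x)" for c0 c1 c2 c3
    unfolding sf_eq_on_def using NU by simp
  have R2: "sf_eq_on U z (sconst c4 + sconst (1/2) * sconst c2 * sconst c2 * sX
                      + sconst (1/2) * sconst c2 * sconst c3 * sX * sX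
                      + sconst (1/6) * sconst c3 * sconst c3 * sX * sX * sX
                      + sconst c3 * (sconst c2 + sconst c3 * sX) * sNu * sTau)
     \<longleftrightarrow> (\<forall>x\<in>U. sf0 z x = c4 + 1/2 * c2 * c2 * x + 1/2 * c2 * c3 * x * x + 1/6 * c3 * c3 * x * x * x
                \<and> sfNT z x = c3 * (c2 + c3 * x))" for c2 c3 c4
    unfolding sf_eq_on_def using NZ by (simp add: algebra_simps)
  have hA: "sf0 u holomorphic_on U" and hD: "sfNT u holomorphic_on U"
    and hP: "sf0 z holomorphic_on U" 
    using assms(3,4) unfolding sf_holo_def by auto
  have hA': "deriv (sf0 u) holomorphic_on U" and hD': "deriv (sfNT u) holomorphic_on U"
    using holomorphic_deriv[OF hA assms(1)] holomorphic_deriv[OF hD assms(1)] by auto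
  show ?thesis
    unfolding L1 R1 R2
  proof
    assume H: "\<forall>x\<in>U. deriv (sf0 z) x = 1/2 * deriv (deriv (sf0 u)) x * deriv (deriv (sf0 u)) x
         \<and> deriv (sfNT z) x = deriv (deriv (sf0 u)) x * deriv (deriv (sfNT u)) x + deriv (sfNT u) x * deriv (sfNT u) x
         \<and> sfNT z x = deriv (deriv (sf0 u)) x * deriv (sfNT u) x
         \<and> sfNT u x = deriv (deriv (sf0 u)) x \<and> deriv (deriv (sfNT u)) x = 0"
    obtain c3 where c3: "\<forall>x\<in>U. deriv (sfNT u) x = 0 + c3"
      using Lconst[OF assms(1,2) hD', of "\<lambda>_. 0" "\<lambda>_. 0"] H by auto
    obtain c2 where c2: "\<forall>x\<in>U. sfNT u x = c3 * x + c2"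
      using Lconst[OF assms(1,2) hD, of "\<lambda>x. c3 * x" "\<lambda>_. c3"] c3
      by (auto intro!: derivative_eq_intros)
    have dgA1: "((\<lambda>x. c2 * x + c3/2 * x * x) has_field_derivative c2 + c3 * x) (at x)" for x
      by (auto intro!: derivative_eq_intros simp: field_simps)
    obtain c1 where c1: "\<forall>x\<in>U. deriv (sf0 u) x = (c2 * x + c3/2 * x * x) + c1"
      using Lconst[OF assms(1,2) hA' dgA1] c2 H by (auto simp: algebra_simps)
    have dgA0: "((\<lambda>x. c1 * x + c2/2 * x * x + c3/6 * x * x * x) has_field_derivative (c2 * x + c3/2 * x * x) + c1) (at x)" for x
      by (auto intro!: derivative_eq_intros simp: field_simps)
    obtain c0 where c0: "\<forall>x\<in>U. sf0 u x = (c1 * x + c2/2 * x * x + c3/6 * x * x * x) + c0"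
      using Lconst[OF assms(1,2) hA dgA0] c1 by auto
    have dgP: "((\<lambda>x. 1/2 * c2 * c2 * x + 1/2 * c2 * c3 * x * x + 1/6 * c3 * c3 * x * x * x) has_field_derivative 1/2 * (c3 * x + c2) * (c3 * x + c2)) (at x)" for x
      by (auto intro!: derivative_eq_intros simp: field_simps)
    obtain c4 where c4: "\<forall>x\<in>U. sf0 z x = (1/2 * c2 * c2 * x + 1/2 * c2 * c3 * x * x + 1/6 * c3 * c3 * x * x * x) + c4"
      using Lconst[OF assms(1,2) hP dgP] c2 H by auto
    show "\<exists>c0 c1 c2 c3 c4. (\<forall>x\<in>U. sf0 u x = c0 + c1 * x + 1/2 * c2 * x * x + 1/6 * c3 * x * x * x
                \<and> sfNT u x = c2 + c3 * x) \<and> (\<forall>x\<in>U. sf0 z x = c4 + 1/2 * c2 * c2 * x + 1/2 * c2 * c3 * x * x + 1/6 * c3 * c3 * x * x * x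
                \<and> sfNT z x = c3 * (c2 + c3 * x))"
      using c0 c2 c3 c4 H by (intro exI[of _ c0] exI[of _ c1] exI[of _ c2] exI[of _ c3] exI[of _ c4]) (auto simp: algebra_simps)
  next
    assume "\<exists>c0 c1 c2 c3 c4. (\<forall>x\<in>U. sf0 u x = c0 + c1 * x + 1/2 * c2 * x * x + 1/6 * c3 * x * x * x
                \<and> sfNT u x = c2 + c3 * x) \<and> (\<forall>x\<in>U. sf0 z x = c4 + 1/2 * c2 * c2 * x + 1/2 * c2 * c3 * x * x + 1/6 * c3 * c3 * x * x * x
                \<and> sfNT z x = c3 * (c2 + c3 * x))"
    then obtain c0 c1 c2 c3 c4 where
      A: "\<forall>x\<in>U. sf0 u x = c0 + c1 * x + 1/2 * c2 * x * x + 1/6 * c3 * x * x * x"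
      and D: "\<forall>x\<in>U. sfNT u x = c2 + c3 * x"
      and P: "\<forall>x\<in>U. sf0 z x = c4 + 1/2 * c2 * c2 * x + 1/2 * c2 * c3 * x * x + 1/6 * c3 * c3 * x * x * x"
      and Q: "\<forall>x\<in>U. sfNT z x = c3 * (c2 + c3 * x)"
      by blast
    have A1: "\<forall>x\<in>U. deriv (sf0 u) x = c1 + c2 * x + 1/2 * c3 * x * x"
      by (rule Ltr[OF assms(1) A]) (auto intro!: derivative_eq_intros simp: field_simps)
    have A2: "\<forall>x\<in>U. deriv (deriv (sf0 u)) x = c2 + c3 * x"
      by (rule Ltr[OF assms(1) A1]) (auto intro!: derivative_eq_intros simp: field_simps)
    have D1: "\<forall>x\<in>U. deriv (sfNT u) x = c3"
      by (rule Ltr[OF assms(1) D]) (auto intro!: derivative_eq_intros)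
    have D2: "\<forall>x\<in>U. deriv (deriv (sfNT u)) x = 0"
      by (rule Ltr[OF assms(1) D1]) (auto intro!: derivative_eq_intros)
    have P1: "\<forall>x\<in>U. deriv (sf0 z) x = 1/2 * (c2 + c3 * x) * (c2 + c3 * x)"
      by (rule Ltr[OF assms(1) P]) (auto intro!: derivative_eq_intros simp: field_simps)
    have Q1: "\<forall>x\<in>U. deriv (sfNT z) x = c3 * c3"
      by (rule Ltr[OF assms(1) Q]) (auto intro!: derivative_eq_intros)
    show "\<forall>x\<in>U. deriv (sf0 z) x = 1/2 * deriv (deriv (sf0 u)) x * deriv (deriv (sf0 u)) x
         \<and> deriv (sfNT z) x = deriv (deriv (sf0 u)) x * deriv (deriv (sfNT u)) x + deriv (sfNT u) x * deriv (sfNT u) x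
         \<and> sfNT z x = deriv (deriv (sf0 u)) x * deriv (sfNT u) x
         \<and> sfNT u x = deriv (deriv (sf0 u)) x \<and> deriv (deriv (sfNT u)) x = 0"
      using A2 D D1 D2 P1 Q1 Q by (auto simp: algebra_simps)
  qed
qed

end
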